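(* Let $T_1=(Q_1,\Sigma,\Delta,R_1,q_1^0)$ and $T_2=(Q_2,\Delta,\Omega,R_2,q_2^0)$ be top-down tree transducers, let $A$ be the domain automaton of $T_2$, and let $\hat{T}_1$ be the product construction of $T_1$ and $A$. Then $\mathcal{R}(T_1)\circ\mathcal{R}(T_2)=\mathcal{R}(\hat{T}_1)\circ\mathcal{R}(T_2)$.
   Context: A top-down tree transducer $T=(Q,\Sigma,\Delta,R,q_0)$ has finite state set $Q$, ranked input/output alphabets $\Sigma,\Delta$, initial state $q_0$, and finite rule set $R$ of rules $q(a(x_1,\dots,x_k))\to t$ with $a\in\Sigma_k$ ($\Sigma_k$ = symbols of rank $k$) and $t$ a tree over $\Delta$ whose leaves may additionally be of the form $q'(x_i)$, $q'\in Q$, $i\in[k]$; rules are used as rewrite rules in the usual way. $\mathcal{R}(T)$ is the set of pairs $(s,t)$ with $t$ a tree over $\Delta$ derivable from $q_0(s)$; $\mathcal{R}_1\circ\mathcal{R}_2=\{(s,u)\mid\exists t:(s,t)\in\mathcal{R}_1,(t,u)\in\mathcal{R}_2\}$. For $q\in Q$, $a\in\Sigma_k$, $\text{rhs}_T(q,a)$ is the set of right-hand sides of rules with left-hand side $q(a(x_1,\dots,x_k))$; for a set $\Gamma$ of right-hand sides, $\Gamma[x_i]$ is the set of $q'\in Q$ with $q'(x_i)$ occurring in some tree of $\Gamma$. Domain automaton of $T$: the top-down tree automaton (transducer over $\Sigma$ with rules of the form $p(a(x_1,\dots,x_k))\to a(p_1(x_1),\dots,p_k(x_k))$) with states all subsets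 of $Q$, initial state $\{q_0\}$, rules $S(a(x_1,\dots,x_k))\to a(S_1(x_1),\dots,S_k(x_k))$ for every $a\in\Sigma_k$, nonempty $S=\{q_1,\dots,q_n\}\subseteq Q$ and nonempty $\Gamma_j\subseteq\text{rhs}_T(q_j,a)$ ($j\in[n]$), where $S_i=\bigcup_j\Gamma_j[x_i]$, and rules $\emptyset(a(x_1,\dots,x_k))\to a(\emptyset(x_1),\dots,\emptyset(x_k))$ for all $a$. Product construction of transducers $T=(Q,\Sigma,\Delta,R,q_0)$ and $T'=(Q',\Delta,\Omega,R',q'_0)$: the transducer with states $Q\times Q'$, input $\Sigma$, output $\Omega$, initial state $(q_0,q'_0)$, and, for every rule $q(a(x_1,\dots,x_k))\to\xi$ of $T$, every $p\in Q'$ and every tree $\zeta$ derivable from $p(\xi)$ using rules of $T'$ in which the leaves of $\xi$ of the form $q''(x_i)$ are treated as unrewritable symbols and a state $p'$ applied to such a leaf stays as $p'(q''(x_i))$, the rule $(q,p)(a(x_1,\dots,x_k))\to\zeta'$, where $\zeta'$ is obtained from $\zeta$ by replacing each $p'(q''(x_i))$ by $(q'',p')(x_i)$. *)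

theory Defs
  imports Main
begin

datatype 'f rtree = Nd 'f "'f rtree list"

text \<open>Right-hand sides: trees over an output alphabet whose leaves may additionally be
  state calls q(x_i). Variable x_{i+1} is encoded by the (0-based) index i.\<close>
datatype ('g, 'q) rhs = RNode 'g "('g, 'q) rhs list" | RState 'q nat

fun wt :: "('f \<times> nat) set \<Rightarrow> 'f rtree \<Rightarrow> bool" where
  "wt A (Nd a ts) \<longleftrightarrow> (a, length ts) \<in> A \<and> (\<forall>t\<in>set ts. wt A t)"

fun wf_rhs :: "('g \<times> nat) set \<Rightarrow> 'q set \<Rightarrow> nat \<Rightarrow> ('g, 'q) rhs \<Rightarrow> bool" where
  "wf_rhs D Q k (RState q i) \<longleftrightarrow> q \<in> Q \<and> i < k"
| "wf_rhs D Q k (RNode b rs) \<longleftrightarrow> (b, length rs) \<in> D \<and> (\<forall>r\<in>set rs. wf_rhs D Q k r)"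

fun calls :: "('g, 'q) rhs \<Rightarrow> ('q \<times> nat) set" where
  "calls (RState q i) = {(q, i)}"
| "calls (RNode b rs) = (\<Union>r\<in>set rs. calls r)"

text \<open>A rule (q, (a,k), t) stands for q(a(x_1,...,x_k)) -> t.\<close>
record ('q, 'f, 'g) tt =
  tt_states :: "'q set"
  tt_inp :: "('f \<times> nat) set"
  tt_out :: "('g \<times> nat) set"
  tt_rules :: "('q \<times> ('f \<times> nat) \<times> ('g, 'q) rhs) set"
  tt_init :: 'q

definition wf_tt :: "('q, 'f, 'g) tt \<Rightarrow> bool" where
  "wf_tt T \<longleftrightarrow> finite (tt_states T) \<and> finite (tt_inp T) \<and> finite (tt_out T)
     \<and> finite (tt_rules T) \<and> tt_init T \<in> tt_states T
     \<and> (\<forall>(q, (a, k), r) \<in> tt_rules T.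
          q \<in> tt_states T \<and> (a, k) \<in> tt_inp T \<and> wf_rhs (tt_out T) (tt_states T) k r)"

text \<open>Derivation semantics: trans T q s t holds iff the ground tree t is derivable from q(s)
  (each state call in a right-hand side is rewritten independently).\<close>
inductive trans :: "('q, 'f, 'g) tt \<Rightarrow> 'q \<Rightarrow> 'f rtree \<Rightarrow> 'g rtree \<Rightarrow> bool"
  and inst :: "('q, 'f, 'g) tt \<Rightarrow> 'f rtree list \<Rightarrow> ('g, 'q) rhs \<Rightarrow> 'g rtree \<Rightarrow> bool"
  for T where
  trans_rule: "(q, (a, length ss), r) \<in> tt_rules T \<Longrightarrow> inst T ss r t \<Longrightarrow> trans T q (Nd a ss) t"
| inst_state: "i < length ss \<Longrightarrow> trans T q (ss ! i) t \<Longrightarrow> inst T ss (RState q i) t"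
| inst_node: "list_all2 (inst T ss) rs ts \<Longrightarrow> inst T ss (RNode b rs) (Nd b ts)"

definition rel :: "('q, 'f, 'g) tt \<Rightarrow> ('f rtree \<times> 'g rtree) set" where
  "rel T = {(s, t). wt (tt_inp T) s \<and> wt (tt_out T) t \<and> trans T (tt_init T) s t}"

definition rhs_set :: "('q, 'f, 'g) tt \<Rightarrow> 'q \<Rightarrow> 'f \<times> nat \<Rightarrow> ('g, 'q) rhs set" where
  "rhs_set T q ak = {r. (q, ak, r) \<in> tt_rules T}"

definition calls_at :: "('g, 'q) rhs set \<Rightarrow> nat \<Rightarrow> 'q set" where
  "calls_at \<Gamma> i = {q'. \<exists>\<xi>\<in>\<Gamma>. (q', i) \<in> calls \<xi>}"

definition dom_aut :: "('q, 'f, 'g) tt \<Rightarrow> ('q set, 'f, 'f) tt" where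
  "dom_aut T = \<lparr> tt_states = Pow (tt_states T),
     tt_inp = tt_inp T, tt_out = tt_inp T,
     tt_rules =
       {(S, (a, k), RNode a (map (\<lambda>i. RState (\<Union>q\<in>S. calls_at (\<Gamma> q) i) i) [0..<k])) | S a k \<Gamma>.
          (a, k) \<in> tt_inp T \<and> S \<subseteq> tt_states T \<and> S \<noteq> {}
          \<and> (\<forall>q\<in>S. \<Gamma> q \<noteq> {} \<and> \<Gamma> q \<subseteq> rhs_set T q (a, k))}
       \<union> {({}, (a, k), RNode a (map (\<lambda>i. RState {} i) [0..<k])) | a k. (a, k) \<in> tt_inp T},
     tt_init = {tt_init T} \<rparr>"

text \<open>prod_der T' p \<xi> \<zeta>': the tree \<zeta> is derivable from p(\<xi>) by rules of T', where leaves
  q''(x_i) of \<xi> are unrewritable and p'(q''(x_i)) is recorded as the state call (q'',p')(x_i).\<close>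
inductive prod_der :: "('p, 'g, 'h) tt \<Rightarrow> 'p \<Rightarrow> ('g, 'q) rhs \<Rightarrow> ('h, 'q \<times> 'p) rhs \<Rightarrow> bool"
  and prod_inst :: "('p, 'g, 'h) tt \<Rightarrow> ('g, 'q) rhs list \<Rightarrow> ('h, 'p) rhs \<Rightarrow> ('h, 'q \<times> 'p) rhs \<Rightarrow> bool"
  for T' where
  pd_leaf: "prod_der T' p (RState q i) (RState (q, p) i)"
| pd_rule: "(p, (b, length xs), r) \<in> tt_rules T' \<Longrightarrow> prod_inst T' xs r z \<Longrightarrow> prod_der T' p (RNode b xs) z"
| pi_state: "j < length xs \<Longrightarrow> prod_der T' p' (xs ! j) z \<Longrightarrow> prod_inst T' xs (RState p' j) z"
| pi_node: "list_all2 (prod_inst T' xs) rs zs \<Longrightarrow> prod_inst T' xs (RNode c rs) (RNode c zs)"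

definition product :: "('q, 'f, 'g) tt \<Rightarrow> ('p, 'g, 'h) tt \<Rightarrow> ('q \<times> 'p, 'f, 'h) tt" where
  "product T T' = \<lparr> tt_states = tt_states T \<times> tt_states T',
     tt_inp = tt_inp T, tt_out = tt_out T',
     tt_rules = {((q, p), (a, k), z) | q p a k \<xi> z.
        (q, (a, k), \<xi>) \<in> tt_rules T \<and> p \<in> tt_states T' \<and> prod_der T' p \<xi> z},
     tt_init = (tt_init T, tt_init T') \<rparr>"

end

theory Submission
  imports Defs
begin

fun sub :: "('g, 'q) rhs list \<Rightarrow> ('g, 'p) rhs \<Rightarrow> ('g, 'q) rhs" where
  "sub xs (RState p j) = xs ! j"
| "sub xs (RNode c rs) = RNode c (map (sub xs) rs)"

fun erase :: "('g, 'q \<times> 'p) rhs \<Rightarrow> ('g, 'q) rhs" where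
  "erase (RState qp i) = RState (fst qp) i"
| "erase (RNode c rs) = RNode c (map erase rs)"

lemma dom_simps[simp]: "tt_states (dom_aut T) = Pow (tt_states T)" "tt_inp (dom_aut T) = tt_inp T"
  "tt_out (dom_aut T) = tt_inp T" "tt_init (dom_aut T) = {tt_init T}"
  by (simp_all add: dom_aut_def)

lemma prod_simps[simp]: "tt_states (product T T') = tt_states T \<times> tt_states T'"
  "tt_inp (product T T') = tt_inp T" "tt_out (product T T') = tt_out T'"
  "tt_init (product T T') = (tt_init T, tt_init T')"
  by (simp_all add: product_def)

lemma prod_rule: "(q, (a, k), \<xi>) \<in> tt_rules T \<Longrightarrow> p \<in> tt_states T' \<Longrightarrow> prod_der T' p \<xi> z
  \<Longrightarrow> ((q, p), (a, k), z) \<in> tt_rules (product T T')"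
  unfolding product_def tt.simps by blast

lemma erase_prod:
  "prod_der (dom_aut T2) P \<xi> z \<Longrightarrow> erase z = \<xi>"
  "prod_inst (dom_aut T2) xs r z \<Longrightarrow> erase z = sub xs r"
proof (induction rule: prod_der_prod_inst.inducts)
  case (pd_leaf p q i)
  then show ?case by simp
next
  case (pd_rule p b xs r z)
  have "\<exists>f. r = RNode b (map (\<lambda>i. RState (f i) i) [0..<length xs])"
    using pd_rule(1) unfolding dom_aut_def tt.simps
  proof (elim UnE CollectE exE conjE)
    fix S a k \<Gamma> assume "(p, (b, length xs), r) = (S, (a, k), RNode a (map (\<lambda>i. RState (\<Union>q\<in>S. calls_at (\<Gamma> q) i) i) [0..<k]))"
    then show ?thesis by (intro exI[of _ "\<lambda>i. \<Union>q\<in>S. calls_at (\<Gamma> q) i"]) auto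
  next
    fix a k assume "(p, (b, length xs), r) = ({}, (a, k), RNode a (map (\<lambda>i. RState {} i) [0..<k]))"
    then show ?thesis by (intro exI[of _ "\<lambda>i. {}"]) auto
  qed
  then obtain f where "r = RNode b (map (\<lambda>i. RState (f i) i) [0..<length xs])" by blast
  then have "sub xs r = RNode b xs" by (simp add: o_def map_nth)
  with pd_rule show ?case by simp
next
  case (pi_state j xs p' z)
  then show ?case by simp
next
  case (pi_node xs rs zs c)
  have "map (erase) zs = map (sub xs) rs"
    using pi_node(1) by (induction rule: list_all2_induct) auto
  then show ?case by simp
qed

lemma backw:
  "trans (product T1 (dom_aut T2)) qp s t \<Longrightarrow> trans T1 (fst qp) s t"
  "inst (product T1 (dom_aut T2)) ss z t \<Longrightarrow> inst T1 ss (erase z) t"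
proof (induction rule: trans_inst.inducts)
  case (trans_rule q a ss r t)
  then obtain \<xi> where "(fst q, (a, length ss), \<xi>) \<in> tt_rules T1"
      "prod_der (dom_aut T2) (snd q) \<xi> r"
    unfolding product_def by auto
  then show ?case using trans_rule erase_prod(1) trans_inst.trans_rule by metis
next
  case (inst_state i ss q t)
  then show ?case by (auto intro: trans_inst.inst_state)
next
  case (inst_node ss rs ts b)
  have "list_all2 (inst T1 ss) (map (erase) rs) ts"
    using inst_node(1) by (induction rule: list_all2_induct) auto
  then show ?case by (auto intro: trans_inst.inst_node)
qed

lemma calls_wf: "wf_rhs D Q k r \<Longrightarrow> (q, i) \<in> calls r \<Longrightarrow> q \<in> Q"
  by (induction r) auto

lemma inst_calls: "inst T ts \<rho> u \<Longrightarrow> (p', i) \<in> calls \<rho> \<Longrightarrow> \<exists>u'. trans T p' (ts ! i) u'"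
proof (induction \<rho> arbitrary: u)
  case (RNode g rs)
  then obtain us where "list_all2 (inst T ts) rs us"
    by (auto elim: inst.cases)
  moreover from RNode obtain r where "r \<in> set rs" "(p', i) \<in> calls r" by auto
  ultimately show ?case using RNode(1)
    by (metis in_set_conv_nth list_all2_conv_all_nth)
next
  case (RState q j)
  then show ?case by (auto elim: inst.cases)
qed

lemma wt_nth: "wt D (Nd b ts) \<Longrightarrow> i < length ts \<Longrightarrow> wt D (ts ! i)"
  by auto

inductive_cases trans_NdE: "trans T q (Nd a ss) t"

lemma forward:
  assumes wf2: "wf_tt T2"
  shows
  "trans T1 q s t \<Longrightarrow> (\<forall>P. P \<subseteq> tt_states T2 \<longrightarrow> wt (tt_inp T2) t \<longrightarrow> (\<forall>p\<in>P. \<exists>u. trans T2 p t u)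
     \<longrightarrow> trans (product T1 (dom_aut T2)) (q, P) s t)"
  "inst T1 ss \<xi> t \<Longrightarrow> (\<forall>P. P \<subseteq> tt_states T2 \<longrightarrow> wt (tt_inp T2) t \<longrightarrow> (\<forall>p\<in>P. \<exists>u. trans T2 p t u)
     \<longrightarrow> (\<exists>z. prod_der (dom_aut T2) P \<xi> z \<and> inst (product T1 (dom_aut T2)) ss z t))"
proof (induction rule: trans_inst.inducts)
  case (trans_rule q a ss r t)
  show ?case
  proof (intro allI impI)
    fix P assume h: "P \<subseteq> tt_states T2" "wt (tt_inp T2) t" "\<forall>p\<in>P. \<exists>u. trans T2 p t u"
    then obtain z where z: "prod_der (dom_aut T2) P r z" "inst (product T1 (dom_aut T2)) ss z t"
      using trans_rule by blast
    have "((q, P), (a, length ss), z) \<in> tt_rules (product T1 (dom_aut T2))"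
      using prod_rule[OF trans_rule(1) _ z(1)] h(1) by simp
    then show "trans (product T1 (dom_aut T2)) (q, P) (Nd a ss) t"
      using z(2) by (rule trans_inst.trans_rule)
  qed
next
  case (inst_state i ss q t)
  show ?case
  proof (intro allI impI)
    fix P assume h: "P \<subseteq> tt_states T2" "wt (tt_inp T2) t" "\<forall>p\<in>P. \<exists>u. trans T2 p t u"
    then have "trans (product T1 (dom_aut T2)) (q, P) (ss ! i) t" using inst_state by blast
    then show "\<exists>z. prod_der (dom_aut T2) P (RState q i) z \<and> inst (product T1 (dom_aut T2)) ss z t"
      using inst_state(1) by (auto intro!: exI[of _ "RState (q, P) i"] pd_leaf trans_inst.inst_state)
  qed
next
  case (inst_node ss rs ts b)
  show ?case
  proof (intro allI impI)
    fix P assume h: "P \<subseteq> tt_states T2" "wt (tt_inp T2) (Nd b ts)" "\<forall>p\<in>P. \<exists>u. trans T2 p (Nd b ts) u"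
    have len: "length rs = length ts" using inst_node(1) by (simp add: list_all2_lengthD)
    have bk: "(b, length ts) \<in> tt_inp T2" using h(2) by simp
    define \<rho> where "\<rho> p = (SOME \<rho>. (p, (b, length ts), \<rho>) \<in> tt_rules T2 \<and> (\<exists>u. inst T2 ts \<rho> u))" for p
    have \<rho>: "(p, (b, length ts), \<rho> p) \<in> tt_rules T2 \<and> (\<exists>u. inst T2 ts (\<rho> p) u)" if pP: "p \<in> P" for p
    proof -
      obtain u where "trans T2 p (Nd b ts) u" using bspec[OF h(3) pP] by (elim exE)
      then have "\<exists>\<rho>. (p, (b, length ts), \<rho>) \<in> tt_rules T2 \<and> (\<exists>u. inst T2 ts \<rho> u)"
        by (blast elim: trans_NdE)
      then show ?thesis unfolding \<rho>_def by (rule someI_ex)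
    qed
    define \<Gamma> where "\<Gamma> p = {\<rho> p}" for p
    define S where "S i = (\<Union>q\<in>P. calls_at (\<Gamma> q) i)" for i
    define r where "r = RNode b (map (\<lambda>i. RState (S i) i) [0..<length ts])"
    have rule: "(P, (b, length rs), r) \<in> tt_rules (dom_aut T2)"
    proof (cases "P = {}")
      case True
      then have r: "r = RNode b (map (\<lambda>i. RState {} i) [0..<length ts])"
        unfolding r_def S_def by simp
      have "({}, (b, length ts), RNode b (map (\<lambda>i. RState {} i) [0..<length ts])) \<in>
         {({}, (a, k), RNode a (map (\<lambda>i. RState {} i) [0..<k])) | a k. (a, k) \<in> tt_inp T2}"
        using bk by (intro CollectI exI[of _ b] exI[of _ "length ts"]) simp
      then show ?thesis using True len r unfolding dom_aut_def tt.simps by (intro UnI2) simp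
    next
      case False
      have "\<forall>q\<in>P. \<Gamma> q \<noteq> {} \<and> \<Gamma> q \<subseteq> rhs_set T2 q (b, length ts)"
        using \<rho> unfolding \<Gamma>_def rhs_set_def by auto
      then have "(P, (b, length ts), RNode b (map (\<lambda>i. RState (\<Union>q\<in>P. calls_at (\<Gamma> q) i) i) [0..<length ts])) \<in>
        {(S, (a, k), RNode a (map (\<lambda>i. RState (\<Union>q\<in>S. calls_at (\<Gamma> q) i) i) [0..<k])) | S a k \<Gamma>.
          (a, k) \<in> tt_inp T2 \<and> S \<subseteq> tt_states T2 \<and> S \<noteq> {}
          \<and> (\<forall>q\<in>S. \<Gamma> q \<noteq> {} \<and> \<Gamma> q \<subseteq> rhs_set T2 q (a, k))}"
        using False bk h(1) by (intro CollectI exI[of _ P] exI[of _ b] exI[of _ "length ts"] exI[of _ \<Gamma>]) simp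
      then show ?thesis using len unfolding dom_aut_def r_def S_def tt.simps by (intro UnI1) simp
    qed
    have Si: "S i \<subseteq> tt_states T2 \<and> (\<forall>p\<in>S i. \<exists>u. trans T2 p (ts ! i) u)" for i
    proof (intro conjI ballI subsetI)
      fix p' assume "p' \<in> S i"
      then obtain q where q: "q \<in> P" "(p', i) \<in> calls (\<rho> q)"
        unfolding S_def calls_at_def \<Gamma>_def by auto
      from \<rho>[OF q(1)] obtain u where "(q, (b, length ts), \<rho> q) \<in> tt_rules T2" "inst T2 ts (\<rho> q) u"
        by blast
      then show "p' \<in> tt_states T2" using wf2 q(2) calls_wf unfolding wf_tt_def by fastforce
      show "\<exists>u. trans T2 p' (ts ! i) u" using inst_calls[OF \<open>inst T2 ts (\<rho> q) u\<close> q(2)] .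
    qed
    have "\<forall>i<length rs. \<exists>z. prod_der (dom_aut T2) (S i) (rs ! i) z \<and> inst (product T1 (dom_aut T2)) ss z (ts ! i)"
    proof (intro allI impI)
      fix i assume i: "i < length rs"
      have "inst T1 ss (rs ! i) (ts ! i) \<and> (\<forall>P. P \<subseteq> tt_states T2 \<longrightarrow> wt (tt_inp T2) (ts ! i) \<longrightarrow> (\<forall>p\<in>P. \<exists>u. trans T2 p (ts ! i) u)
     \<longrightarrow> (\<exists>z. prod_der (dom_aut T2) P (rs ! i) z \<and> inst (product T1 (dom_aut T2)) ss z (ts ! i)))"
        using inst_node(1) i by (simp add: list_all2_conv_all_nth)
      moreover have "wt (tt_inp T2) (ts ! i)" using h(2) i len by simp
      ultimately show "\<exists>z. prod_der (dom_aut T2) (S i) (rs ! i) z \<and> inst (product T1 (dom_aut T2)) ss z (ts ! i)"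
        using Si[of i] by blast
    qed
    then obtain zf where zf: "\<forall>i<length rs. prod_der (dom_aut T2) (S i) (rs ! i) (zf i) \<and> inst (product T1 (dom_aut T2)) ss (zf i) (ts ! i)"
      by metis
    define zs where "zs = map zf [0..<length rs]"
    have "list_all2 (prod_inst (dom_aut T2) rs) (map (\<lambda>i. RState (S i) i) [0..<length ts]) zs"
      using zf len unfolding zs_def by (auto simp: list_all2_conv_all_nth intro: pi_state)
    then have "prod_inst (dom_aut T2) rs r (RNode b zs)" unfolding r_def by (rule pi_node)
    then have "prod_der (dom_aut T2) P (RNode b rs) (RNode b zs)" by (rule pd_rule[OF rule])
    moreover have "list_all2 (inst (product T1 (dom_aut T2)) ss) zs ts"
      using zf len unfolding zs_def by (auto simp: list_all2_conv_all_nth)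
    then have "inst (product T1 (dom_aut T2)) ss (RNode b zs) (Nd b ts)" by (rule trans_inst.inst_node)
    ultimately show "\<exists>z. prod_der (dom_aut T2) P (RNode b rs) z \<and> inst (product T1 (dom_aut T2)) ss z (Nd b ts)"
      by blast
  qed
qed

theorem lemma3:
  fixes T1 :: "('q1, 'f, 'g) tt" and T2 :: "('q2, 'g, 'h) tt"
  assumes "wf_tt T1" and "wf_tt T2" and "tt_out T1 = tt_inp T2"
  shows "rel T1 O rel T2 = rel (product T1 (dom_aut T2)) O rel T2"
proof
  show "rel T1 O rel T2 \<subseteq> rel (product T1 (dom_aut T2)) O rel T2"
  proof
    fix x assume "x \<in> rel T1 O rel T2"
    then obtain s t u where x: "x = (s, u)" and st: "(s, t) \<in> rel T1" and tu: "(t, u) \<in> rel T2" by blast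
    have q2: "tt_init T2 \<in> tt_states T2" using assms(2) unfolding wf_tt_def by simp
    have "trans (product T1 (dom_aut T2)) (tt_init T1, {tt_init T2}) s t"
      using forward(1)[OF assms(2), rule_format, of T1 "tt_init T1" s t "{tt_init T2}"] st tu q2
      unfolding rel_def by auto
    then have "(s, t) \<in> rel (product T1 (dom_aut T2))"
      using st assms(3) unfolding rel_def by simp
    then show "x \<in> rel (product T1 (dom_aut T2)) O rel T2" using x tu by blast
  qed
next
  show "rel (product T1 (dom_aut T2)) O rel T2 \<subseteq> rel T1 O rel T2"
  proof
    fix x assume "x \<in> rel (product T1 (dom_aut T2)) O rel T2"
    then obtain s t u where x: "x = (s, u)" and st: "(s, t) \<in> rel (product T1 (dom_aut T2))"
      and tu: "(t, u) \<in> rel T2" by blast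
    have "trans (product T1 (dom_aut T2)) (tt_init T1, {tt_init T2}) s t"
      using st unfolding rel_def by simp
    then have "trans T1 (tt_init T1) s t" using backw(1) by fastforce
    then have "(s, t) \<in> rel T1" using st assms(3) unfolding rel_def by simp
    then show "x \<in> rel T1 O rel T2" using x tu by blast
  qed
qed

end
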